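(* Let $b,c:\mathbb{R}\to[0,\infty)$ be continuous, let $t_0\in\mathbb{R}$, $x_0>0$, $y_0>0$, $z_0\ge 0$, and put $N=x_0+y_0+z_0$ and $\kappa=\frac{y_0}{x_0}$. Consider the system $$x'=-\frac{b(t)xy}{x+y},\qquad y'=\frac{b(t)xy}{x+y}-c(t)y,\qquad z'=c(t)y,$$ with $x,y>0$ and $x(t_0)=x_0$, $y(t_0)=y_0$, $z(t_0)=z_0$. Then the solution is given by $$x(t)=x_0\exp\left\{-\kappa\int_{t_0}^t b(s)\left(\kappa+e^{\int_{t_0}^s (c-b)(\tau)\,d\tau}\right)^{-1}ds\right\},$$ $$y(t)=y_0\exp\left\{\int_{t_0}^t\left[b(s)\left(1+\kappa e^{\int_{t_0}^s (b-c)(\tau)\,d\tau}\right)^{-1}-c(s)\right]ds\right\},$$ $$z(t)=N-\left(y_0e^{\int_{t_0}^t (b-c)(s)\,ds}+x_0\right)\exp\left\{-\kappa\int_{t_0}^t b(s)\left(\kappa+e^{\int_{t_0}^s (c-b)(\tau)\,d\tau}\right)^{-1}ds\right\}.$$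
   Context: $x$, $y$, $z$ denote the susceptible, infected and removed populations, respectively, as functions of real time $t$. *)

theory Defs
  imports "HOL-Analysis.Analysis"
begin

definition oint :: "real \<Rightarrow> real \<Rightarrow> (real \<Rightarrow> real) \<Rightarrow> real" where
  "oint a b f = (if a \<le> b then integral {a..b} f else - integral {b..a} f)"

end

theory Submission
  imports Defs
begin

lemma oint_split:
  assumes f: "continuous_on UNIV f" and "m \<le> a" "m \<le> t"
  shows "oint a t f = integral {m..t} f - integral {m..a} f"
proof -
  have int: "\<And>u v. f integrable_on {u..v}"
    by (rule integrable_continuous_interval, rule continuous_on_subset[OF f]) auto
  show ?thesis
  proof (cases "a \<le> t")
    case True
    then show ?thesis using Henstock_Kurzweil_Integration.integral_combine[where f=f and a=m and c=a and b=t] assms int unfolding oint_def by auto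
  next
    case False
    then show ?thesis using Henstock_Kurzweil_Integration.integral_combine[where f=f and a=m and c=t and b=a] assms int unfolding oint_def by auto
  qed
qed

lemma oint_deriv:
  assumes f: "continuous_on UNIV f"
  shows "((\<lambda>t. oint a t f) has_real_derivative f t) (at t)"
proof -
  define m where "m = min a t - 1"
  define M where "M = max a t + 1"
  have tin: "t \<in> {m<..<M}" unfolding m_def M_def by auto
  have "((\<lambda>s. integral {m..s} f) has_real_derivative f t) (at t within {m..M})"
    by (rule integral_has_real_derivative, rule continuous_on_subset[OF f]) (use tin in auto)
  moreover have "at t within {m..M} = at t"
    by (rule at_within_interior) (use tin in auto)
  ultimately have D: "((\<lambda>s. integral {m..s} f) has_real_derivative f t) (at t)" by simp
  have D2: "((\<lambda>s. integral {m..s} f - integral {m..a} f) has_real_derivative f t) (at t)"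
    using DERIV_diff[OF D DERIV_const[of "integral {m..a} f" "at t"]] by simp
  show ?thesis
    apply (rule has_field_derivative_transform_within_open[OF D2, of "{m<..<M}"])
    using tin apply auto
    apply (rule oint_split[symmetric, OF f]) unfolding m_def by auto
qed

lemma oint_neg: "oint a t (\<lambda>s. c s - b s) = - oint a t (\<lambda>s. b s - c s)"
proof -
  have "(\<lambda>s. c s - b s) = (\<lambda>s. - (b s - c s))" by auto
  then show ?thesis unfolding oint_def by (simp only: integral_neg) simp
qed

lemma oint_cont:
  assumes f: "continuous_on UNIV f"
  shows "continuous_on UNIV (\<lambda>t. oint a t f)"
  by (rule continuous_at_imp_continuous_on) (use DERIV_isCont[OF oint_deriv[OF f]] in blast)

lemma ln_deriv:
  assumes d: "(f has_real_derivative D) (at t)" and p: "f t > 0"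
  shows "((\<lambda>t. ln (f t)) has_real_derivative D / f t) (at t)"
  using DERIV_chain2[OF DERIV_ln_divide[OF p] d] by simp

lemma alg_A: "(x::real) > 0 \<Longrightarrow> y > 0 \<Longrightarrow> (b * x * y / (x + y) - c * y) / y - (- b * x * y / (x + y)) / x - (b - c) = 0"
proof -
  assume a: "x > 0" "y > 0"
  define s where "s = x + y"
  have s: "s > 0" "s \<noteq> 0" using a unfolding s_def by auto
  have "(b * x * y / s - c * y) / y - (- b * x * y / s) / x - (b - c) = (b * x + b * y - b * s)/ s"
    using a s by (simp add: field_simps)
  also have "... = 0" unfolding s_def by (simp add: algebra_simps)
  finally show ?thesis unfolding s_def .
qed

lemma Bq: "(x::real) > 0 \<Longrightarrow> q > 0 \<Longrightarrow> E > 0 \<Longrightarrow> (- b * x * (k * E * x) / (x * q)) / x + k * (b / (q / E)) = 0"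
  by (simp add: field_simps)
lemma B: "(x::real) > 0 \<Longrightarrow> k > 0 \<Longrightarrow> E > 0 \<Longrightarrow> (- b * x * (k * E * x) / (x + k * E * x)) / x + k * (b / (k + inverse E)) = 0"
proof -
  assume a: "x > 0" "k > 0" "E > 0"
  have 1: "x + k * E * x = x * (1 + k * E)" by (simp add: algebra_simps)
  have 2: "k + inverse E = (1 + k * E) / E" using a by (simp add: field_simps)
  have p: "1 + k * E > 0" using a by (simp add: add_pos_pos)
  show ?thesis unfolding 1 2 by (rule Bq[OF a(1) p a(3)])
qed
lemma Cq: "(x::real) > 0 \<Longrightarrow> k > 0 \<Longrightarrow> E > 0 \<Longrightarrow> q > 0 \<Longrightarrow> (b * x * (k * E * x) / (x * q) - c * (k * E * x)) / (k * E * x) - (b / q - c) = 0"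
  by (simp add: field_simps)
lemma C: "(x::real) > 0 \<Longrightarrow> k > 0 \<Longrightarrow> E > 0 \<Longrightarrow> (b * x * (k * E * x) / (x + (k * E * x)) - c * (k * E * x)) / (k * E * x) - (b / (1 + k * E) - c) = 0"
proof -
  assume a: "x > 0" "k > 0" "E > 0"
  have 1: "x + k * E * x = x * (1 + k * E)" by (simp add: algebra_simps)
  have p: "1 + k * E > 0" using a by (simp add: add_pos_pos)
  show ?thesis unfolding 1 by (rule Cq[OF a p])
qed

theorem mainTheorem1:
  fixes b c x y z :: "real \<Rightarrow> real" and t0 x0 y0 z0 :: real
  assumes b_cont: "continuous_on UNIV b" and b_nonneg: "\<And>t. b t \<ge> 0"
    and c_cont: "continuous_on UNIV c" and c_nonneg: "\<And>t. c t \<ge> 0"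
    and x0_pos: "x0 > 0" and y0_pos: "y0 > 0" and z0_nonneg: "z0 \<ge> 0"
    and x_pos: "\<And>t. x t > 0" and y_pos: "\<And>t. y t > 0"
    and x_ode: "\<And>t. (x has_real_derivative (- b t * x t * y t / (x t + y t))) (at t)"
    and y_ode: "\<And>t. (y has_real_derivative (b t * x t * y t / (x t + y t) - c t * y t)) (at t)"
    and z_ode: "\<And>t. (z has_real_derivative (c t * y t)) (at t)"
    and x_init: "x t0 = x0" and y_init: "y t0 = y0" and z_init: "z t0 = z0"
  shows "\<forall>t.
     x t = x0 * exp (- (y0 / x0) * oint t0 t (\<lambda>s. b s /
              (y0 / x0 + exp (oint t0 s (\<lambda>\<tau>. c \<tau> - b \<tau>))))) \<and>
     y t = y0 * exp (oint t0 t (\<lambda>s. b s /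
              (1 + (y0 / x0) * exp (oint t0 s (\<lambda>\<tau>. b \<tau> - c \<tau>))) - c s)) \<and>
     z t = (x0 + y0 + z0) - (y0 * exp (oint t0 t (\<lambda>s. b s - c s)) + x0) *
              exp (- (y0 / x0) * oint t0 t (\<lambda>s. b s /
              (y0 / x0 + exp (oint t0 s (\<lambda>\<tau>. c \<tau> - b \<tau>)))))"
proof -
  define k where "k = y0 / x0"
  have kpos: "k > 0" unfolding k_def using x0_pos y0_pos by simp
  define B where "B t = oint t0 t (\<lambda>\<tau>. b \<tau> - c \<tau>)" for t
  define g where "g s = b s / (k + exp (oint t0 s (\<lambda>\<tau>. c \<tau> - b \<tau>)))" for s
  define h where "h s = b s / (1 + k * exp (oint t0 s (\<lambda>\<tau>. b \<tau> - c \<tau>))) - c s" for s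
  define G where "G t = oint t0 t g" for t
  define H where "H t = oint t0 t h" for t
  have o0: "\<And>f. oint t0 t0 f = 0" unfolding oint_def by simp
  have bc_cont: "continuous_on UNIV (\<lambda>\<tau>. b \<tau> - c \<tau>)" "continuous_on UNIV (\<lambda>\<tau>. c \<tau> - b \<tau>)"
    using b_cont c_cont by (auto intro!: continuous_intros)
  have cB: "continuous_on UNIV (\<lambda>s. oint t0 s (\<lambda>\<tau>. b \<tau> - c \<tau>))"
    and cC: "continuous_on UNIV (\<lambda>s. oint t0 s (\<lambda>\<tau>. c \<tau> - b \<tau>))"
    using oint_cont bc_cont by auto
  have g_cont: "continuous_on UNIV g" unfolding g_def
  proof (intro continuous_intros b_cont cC ballI)
    fix s :: real
    have "k + exp (oint t0 s (\<lambda>\<tau>. c \<tau> - b \<tau>)) > 0" by (intro add_pos_pos kpos exp_gt_zero)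
    then show "k + exp (oint t0 s (\<lambda>\<tau>. c \<tau> - b \<tau>)) \<noteq> 0" by simp
  qed
  have h_cont: "continuous_on UNIV h" unfolding h_def
  proof (intro continuous_intros b_cont c_cont cB ballI)
    fix s :: real
    have "1 + k * exp (oint t0 s (\<lambda>\<tau>. b \<tau> - c \<tau>)) > 0" by (intro add_pos_pos mult_pos_pos kpos exp_gt_zero zero_less_one)
    then show "1 + k * exp (oint t0 s (\<lambda>\<tau>. b \<tau> - c \<tau>)) \<noteq> 0" by simp
  qed
  have DB: "\<And>t. (B has_real_derivative (b t - c t)) (at t)"
    unfolding B_def by (rule oint_deriv[OF bc_cont(1)])
  have DG: "\<And>t. (G has_real_derivative g t) (at t)"
    unfolding G_def by (rule oint_deriv[OF g_cont])
  have DH: "\<And>t. (H has_real_derivative h t) (at t)"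
    unfolding H_def by (rule oint_deriv[OF h_cont])
  have xne: "\<And>t. x t \<noteq> 0" and yne: "\<And>t. y t \<noteq> 0" and xyne: "\<And>t. x t + y t \<noteq> 0"
    using x_pos y_pos by (metis less_irrefl, metis less_irrefl, metis add_pos_pos less_irrefl)
  have ratio: "y t = k * exp (B t) * x t" for t
  proof -
    have "((\<lambda>t. ln (y t) - ln (x t) - B t) has_real_derivative 0) (at t)" for t
    proof -
      have D: "((\<lambda>t. ln (y t) - ln (x t) - B t) has_real_derivative
         ((b t * x t * y t / (x t + y t) - c t * y t) / y t
          - (- b t * x t * y t / (x t + y t)) / x t - (b t - c t))) (at t)"
        by (rule DERIV_diff[OF DERIV_diff[OF ln_deriv[OF y_ode y_pos] ln_deriv[OF x_ode x_pos]] DB])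
      have E: "(b t * x t * y t / (x t + y t) - c t * y t) / y t
          - (- b t * x t * y t / (x t + y t)) / x t - (b t - c t) = 0"
        by (rule alg_A[OF x_pos y_pos])
      show ?thesis using D by (simp only: E)
    qed
    then have "ln (y t) - ln (x t) - B t = ln (y t0) - ln (x t0) - B t0"
      by (rule DERIV_isconst_all[rule_format])
    then have "ln (y t) = ln k + B t + ln (x t)"
      unfolding B_def o0 x_init y_init k_def using x0_pos y0_pos by (simp add: ln_div)
    then have "exp (ln (y t)) = exp (ln k + B t + ln (x t))" by simp
    then show ?thesis using kpos x_pos[of t] y_pos[of t] by (simp add: exp_add)
  qed
  have Cneg: "exp (oint t0 s (\<lambda>\<tau>. c \<tau> - b \<tau>)) = inverse (exp (B s))" for s
    unfolding B_def oint_neg[of t0 s c b] by (rule exp_minus)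
  have xsol: "x t = x0 * exp (- k * G t)" for t
  proof -
    have "((\<lambda>t. ln (x t) + k * G t) has_real_derivative 0) (at t)" for t
    proof -
      have D: "((\<lambda>t. ln (x t) + k * G t) has_real_derivative
         ((- b t * x t * y t / (x t + y t)) / x t + k * g t)) (at t)"
        by (rule DERIV_add[OF ln_deriv[OF x_ode x_pos] DERIV_cmult[OF DG]])
      have E: "(- b t * x t * y t / (x t + y t)) / x t + k * g t = 0"
        unfolding g_def Cneg ratio[of t] by (rule B[OF x_pos kpos exp_gt_zero])
      show ?thesis using D by (simp only: E)
    qed
    then have "ln (x t) + k * G t = ln (x t0) + k * G t0"
      by (rule DERIV_isconst_all[rule_format])
    then have "ln (x t) = ln x0 - k * G t" unfolding G_def o0 x_init by simp
    then have e: "ln (x t) = ln x0 + (- k * G t)" by simp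
    have "x t = exp (ln (x t))" using x_pos[of t] by simp
    also have "\<dots> = exp (ln x0 + (- k * G t))" by (simp only: e)
    also have "\<dots> = x0 * exp (- k * G t)" by (simp only: exp_add exp_ln[OF x0_pos])
    finally show ?thesis .
  qed
  have ysol: "y t = y0 * exp (H t)" for t
  proof -
    have "((\<lambda>t. ln (y t) - H t) has_real_derivative 0) (at t)" for t
    proof -
      have D: "((\<lambda>t. ln (y t) - H t) has_real_derivative
         ((b t * x t * y t / (x t + y t) - c t * y t) / y t - h t)) (at t)"
        by (rule DERIV_diff[OF ln_deriv[OF y_ode y_pos] DH])
      have E: "(b t * x t * y t / (x t + y t) - c t * y t) / y t - h t = 0"
        unfolding h_def B_def[symmetric] ratio[of t] by (rule C[OF x_pos kpos exp_gt_zero])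
      show ?thesis using D by (simp only: E)
    qed
    then have "ln (y t) - H t = ln (y t0) - H t0"
      by (rule DERIV_isconst_all[rule_format])
    then have "ln (y t) = ln y0 + H t" unfolding H_def o0 y_init by simp
    then have "exp (ln (y t)) = exp (ln y0 + H t)" by simp
    then show ?thesis using y0_pos y_pos[of t] by (simp add: exp_add)
  qed
  have zsol: "z t = (x0 + y0 + z0) - x t - y t" for t
  proof -
    have "((\<lambda>t. x t + y t + z t) has_real_derivative 0) (at t)" for t
    proof -
      have "((\<lambda>t. x t + y t + z t) has_real_derivative
         ((- b t * x t * y t / (x t + y t)) + (b t * x t * y t / (x t + y t) - c t * y t) + c t * y t)) (at t)"
        by (rule DERIV_add[OF DERIV_add[OF x_ode y_ode] z_ode])
      then show ?thesis by simp
    qed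
    then have "x t + y t + z t = x t0 + y t0 + z t0"
      by (rule DERIV_isconst_all[rule_format])
    then show ?thesis using x_init y_init z_init by simp
  qed
  show ?thesis
  proof
    fix t
    have kx: "k * x0 = y0" unfolding k_def using x0_pos by simp
    have z2: "z t = (x0 + y0 + z0) - (y0 * exp (B t) + x0) * exp (- k * G t)"
      unfolding zsol ratio[of t] xsol[of t] kx[symmetric] by (simp only: algebra_simps)
    have x2: "x t = x0 * exp (- k * G t)" by (rule xsol)
    have y2: "y t = y0 * exp (H t)" by (rule ysol)
    show "x t = x0 * exp (- (y0 / x0) * oint t0 t (\<lambda>s. b s /
              (y0 / x0 + exp (oint t0 s (\<lambda>\<tau>. c \<tau> - b \<tau>))))) \<and>
     y t = y0 * exp (oint t0 t (\<lambda>s. b s /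
              (1 + (y0 / x0) * exp (oint t0 s (\<lambda>\<tau>. b \<tau> - c \<tau>))) - c s)) \<and>
     z t = (x0 + y0 + z0) - (y0 * exp (oint t0 t (\<lambda>s. b s - c s)) + x0) *
              exp (- (y0 / x0) * oint t0 t (\<lambda>s. b s /
              (y0 / x0 + exp (oint t0 s (\<lambda>\<tau>. c \<tau> - b \<tau>)))))"
      using x2 y2 z2 unfolding G_def g_def H_def h_def B_def k_def by (intro conjI)
  qed
qed

end
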